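(* Let $\mathcal{A}\in\mathcal{T}'_6$ with $c_{13}^4=c_{14}^5=c_{15}^6=c_{24}^5=c_{25}^6=c_{14}^6=c_{24}^6=c_{13}^6=0$ and $c_{13}^5c_{35}^6\ne0$. Then the automorphisms of $\mathcal{A}$ are exactly the linear maps $\varphi$ given by $\varphi(e_1)=xe_1+a_{61}e_6$, $\varphi(e_2)=e_2+a_{62}e_6$, $\varphi(e_3)=xe_3$, $\varphi(e_4)=xe_4$, $\varphi(e_5)=x^2e_5$, $\varphi(e_6)=x^3e_6$, with $x\in\mathbb{C}^*$ and $a_{61},a_{62}\in\mathbb{C}$.
   Context: Over $\mathbb{C}$, basis $e_1,\dots,e_n$, $e_ie_j=\sum_kc_{ij}^ke_k$. For $n\ge3$, $\mathcal{T}'_n$ is the family of anticommutative algebra structures with $c_{ij}^k=0$ whenever $k\le\max\{i,j\}$ and $e_ie_{i+1}=e_{i+2}$ for $1\le i\le n-2$, other structure constants arbitrary subject to these and anticommutativity. *)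

theory Defs
  imports Complex_Main
begin

text \<open>Algebras on C^n with basis e_1..e_n; vectors are coordinate functions
  nat => complex supported on {1..n}; structure constants c i j k means c_{ij}^k.\<close>

definition vecs :: "nat \<Rightarrow> (nat \<Rightarrow> complex) set" where
  "vecs n = {v. \<forall>k. k \<notin> {1..n} \<longrightarrow> v k = 0}"

definition basis_vec :: "nat \<Rightarrow> nat \<Rightarrow> complex" where
  "basis_vec i = (\<lambda>k. if k = i then 1 else 0)"

definition alg_mult :: "nat \<Rightarrow> (nat \<Rightarrow> nat \<Rightarrow> nat \<Rightarrow> complex)
    \<Rightarrow> (nat \<Rightarrow> complex) \<Rightarrow> (nat \<Rightarrow> complex) \<Rightarrow> (nat \<Rightarrow> complex)" where
  "alg_mult n c u v = (\<lambda>k. if k \<in> {1..n}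
       then (\<Sum>i=1..n. \<Sum>j=1..n. u i * v j * c i j k) else 0)"

definition in_Tprime :: "nat \<Rightarrow> (nat \<Rightarrow> nat \<Rightarrow> nat \<Rightarrow> complex) \<Rightarrow> bool" where
  "in_Tprime n c \<longleftrightarrow> n \<ge> 3 \<and>
     (\<forall>i\<in>{1..n}. \<forall>j\<in>{1..n}. \<forall>k\<in>{1..n}. c i j k = - c j i k) \<and>
     (\<forall>i\<in>{1..n}. \<forall>j\<in>{1..n}. \<forall>k\<in>{1..n}. k \<le> max i j \<longrightarrow> c i j k = 0) \<and>
     (\<forall>i. 1 \<le> i \<and> i \<le> n - 2 \<longrightarrow>
        (\<forall>k\<in>{1..n}. c i (i+1) k = (if k = i + 2 then 1 else 0)))"

definition linear_on_vecs :: "nat \<Rightarrow> ((nat \<Rightarrow> complex) \<Rightarrow> (nat \<Rightarrow> complex)) \<Rightarrow> bool" where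
  "linear_on_vecs n \<phi> \<longleftrightarrow>
     (\<forall>u\<in>vecs n. \<forall>v\<in>vecs n. \<phi> (\<lambda>k. u k + v k) = (\<lambda>k. \<phi> u k + \<phi> v k)) \<and>
     (\<forall>a::complex. \<forall>u\<in>vecs n. \<phi> (\<lambda>k. a * u k) = (\<lambda>k. a * \<phi> u k))"

definition is_automorphism :: "nat \<Rightarrow> (nat \<Rightarrow> nat \<Rightarrow> nat \<Rightarrow> complex)
    \<Rightarrow> ((nat \<Rightarrow> complex) \<Rightarrow> (nat \<Rightarrow> complex)) \<Rightarrow> bool" where
  "is_automorphism n c \<phi> \<longleftrightarrow> linear_on_vecs n \<phi> \<and> bij_betw \<phi> (vecs n) (vecs n) \<and>
     (\<forall>u\<in>vecs n. \<forall>v\<in>vecs n. \<phi> (alg_mult n c u v) = alg_mult n c (\<phi> u) (\<phi> v))"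

end

theory Submission
  imports Defs
begin
lemma sum6: "(\<Sum>i=1..6::nat. f i) = f 1 + f 2 + f 3 + f 4 + f 5 + f 6" for f :: "nat \<Rightarrow> 'a::comm_monoid_add"
  by (simp add: sum.atLeast_Suc_atMost numeral_eq_Suc add.assoc)

definition P :: "complex \<Rightarrow> complex \<Rightarrow> (nat \<Rightarrow> complex) \<Rightarrow> (nat \<Rightarrow> complex) \<Rightarrow> nat \<Rightarrow> complex" where
  "P al be u v = (\<lambda>k. if k = 3 then u 1 * v 2 - u 2 * v 1
     else if k = 4 then u 2 * v 3 - u 3 * v 2
     else if k = 5 then al * (u 1 * v 3 - u 3 * v 1) + (u 3 * v 4 - u 4 * v 3)
     else if k = 6 then (u 4 * v 5 - u 5 * v 4) + be * (u 3 * v 5 - u 5 * v 3)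
     else 0)"

lemma k6: "k \<in> {1..6::nat} \<Longrightarrow> k = 1 \<or> k = 2 \<or> k = 3 \<or> k = 4 \<or> k = 5 \<or> k = 6" by auto

lemma alg_mult_P:
  assumes T: "in_Tprime 6 c"
    and "c 1 3 4 = 0" and "c 1 4 5 = 0" and "c 1 5 6 = 0" and "c 2 4 5 = 0"
    and "c 2 5 6 = 0" and "c 1 4 6 = 0" and "c 2 4 6 = 0" and "c 1 3 6 = 0"
  shows "alg_mult 6 c u v = P (c 1 3 5) (c 3 5 6) u v"
proof -
  have TT: "(\<forall>i\<in>{1..6}. \<forall>j\<in>{1..6}. \<forall>k\<in>{1..6}. c i j k = - c j i k) \<and>
     (\<forall>i\<in>{1..6}. \<forall>j\<in>{1..6}. \<forall>k\<in>{1..6}. k \<le> max i j \<longrightarrow> c i j k = 0) \<and>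
     (\<forall>i. 1 \<le> i \<and> i \<le> 6 - 2 \<longrightarrow>
        (\<forall>k\<in>{1..6}. c i (i+1) k = (if k = i + 2 then 1 else 0)))"
    using T unfolding in_Tprime_def by blast
  have A': "\<And>i j k. i\<in>{1..6} \<Longrightarrow> j\<in>{1..6} \<Longrightarrow> k\<in>{1..6} \<Longrightarrow> j < i \<Longrightarrow> c i j k = - c j i k"
    using TT by blast
  have Z: "\<And>i j k. i\<in>{1..6} \<Longrightarrow> j\<in>{1..6} \<Longrightarrow> k\<in>{1..6} \<Longrightarrow> k \<le> max i j \<Longrightarrow> c i j k = 0"
    using TT by blast
  have TT3: "\<forall>i. 1 \<le> i \<and> i \<le> 6 - 2 \<longrightarrow>
        (\<forall>k\<in>{1..6}. c i (i+1) k = (if k = i + 2 then 1 else 0))" using TT by blast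
  have Ch: "\<And>i k. 1 \<le> i \<Longrightarrow> i \<le> 4 \<Longrightarrow> k\<in>{1..6} \<Longrightarrow> c i (i+1) k = (if k = i + 2 then 1 else 0)"
    using TT3 by (simp add: eval_nat_numeral)
  have D: "\<And>i k. i\<in>{1..6} \<Longrightarrow> k\<in>{1..6} \<Longrightarrow> c i i k = 0"
  proof -
    fix i k assume "i\<in>{1..6::nat}" "k\<in>{1..6::nat}"
    then have "c i i k = - c i i k" using TT by blast
    then show "c i i k = 0" by (simp add: eval_nat_numeral)
  qed
  have ch123: "c 1 2 3 = 1" using Ch[of 1 3] by (simp add: eval_nat_numeral)
  have ch124: "c 1 2 4 = 0" using Ch[of 1 4] by (simp add: eval_nat_numeral)
  have ch125: "c 1 2 5 = 0" using Ch[of 1 5] by (simp add: eval_nat_numeral)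
  have ch126: "c 1 2 6 = 0" using Ch[of 1 6] by (simp add: eval_nat_numeral)
  have ch234: "c 2 3 4 = 1" using Ch[of 2 4] by (simp add: eval_nat_numeral)
  have ch235: "c 2 3 5 = 0" using Ch[of 2 5] by (simp add: eval_nat_numeral)
  have ch236: "c 2 3 6 = 0" using Ch[of 2 6] by (simp add: eval_nat_numeral)
  have ch345: "c 3 4 5 = 1" using Ch[of 3 5] by (simp add: eval_nat_numeral)
  have ch346: "c 3 4 6 = 0" using Ch[of 3 6] by (simp add: eval_nat_numeral)
  have ch456: "c 4 5 6 = 1" using Ch[of 4 6] by (simp add: eval_nat_numeral)
  note ch = ch123 ch124 ch125 ch126 ch234 ch235 ch236 ch345 ch346 ch456
  show ?thesis
  proof
    fix k
    show "alg_mult 6 c u v k = P (c 1 3 5) (c 3 5 6) u v k"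
    proof (cases "k \<in> {1..6}")
      case False thus ?thesis by (auto simp: alg_mult_def P_def)
    next
      case True
      then show ?thesis using k6[OF True] assms(2-)
        apply (elim disjE)
        apply (simp_all add: alg_mult_def P_def sum6 Z A' D ch algebra_simps del: One_nat_def)
        done

    qed
  qed
qed

lemma basis_in: "i \<in> {1..n} \<Longrightarrow> basis_vec i \<in> vecs n"
  by (auto simp: basis_vec_def vecs_def)

lemma phi_zero: "linear_on_vecs n \<phi> \<Longrightarrow> \<phi> (\<lambda>k. 0) = (\<lambda>k. 0)"
proof -
  assume L: "linear_on_vecs n \<phi>"
  have z: "(\<lambda>k. 0::complex) \<in> vecs n" by (simp add: vecs_def)
  have H: "\<forall>a::complex. \<forall>u\<in>vecs n. \<phi> (\<lambda>k. a * u k) = (\<lambda>k. a * \<phi> u k)"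
    using L unfolding linear_on_vecs_def by blast
  show ?thesis using H[rule_format, OF z, of 0] by simp
qed

lemma lin_sum:
  assumes L: "linear_on_vecs n \<phi>" and "finite S" and "S \<subseteq> {1..n}"
  shows "\<phi> (\<lambda>k. \<Sum>i\<in>S. u i * basis_vec i k) = (\<lambda>k. \<Sum>i\<in>S. u i * \<phi> (basis_vec i) k)"
  using assms(2,3)
proof (induction S rule: finite_induct)
  case empty
  then show ?case using phi_zero[OF L] by simp
next
  case (insert i S)
  have bi: "basis_vec i \<in> vecs n" using insert by (auto intro: basis_in)
  have v1: "(\<lambda>k. u i * basis_vec i k) \<in> vecs n" using bi by (simp add: vecs_def)
  have v2: "(\<lambda>k. \<Sum>i\<in>S. u i * basis_vec i k) \<in> vecs n"
    using insert.prems unfolding vecs_def basis_vec_def by (auto intro!: sum.neutral)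
  have H1: "\<forall>u\<in>vecs n. \<forall>v\<in>vecs n. \<phi> (\<lambda>k. u k + v k) = (\<lambda>k. \<phi> u k + \<phi> v k)"
   and H2: "\<forall>a::complex. \<forall>u\<in>vecs n. \<phi> (\<lambda>k. a * u k) = (\<lambda>k. a * \<phi> u k)"
    using L unfolding linear_on_vecs_def by blast+
  have "\<phi> (\<lambda>k. \<Sum>i\<in>insert i S. u i * basis_vec i k)
      = \<phi> (\<lambda>k. (\<lambda>k. u i * basis_vec i k) k + (\<lambda>k. \<Sum>i\<in>S. u i * basis_vec i k) k)"
    using insert by simp
  also have "\<dots> = (\<lambda>k. \<phi> (\<lambda>k. u i * basis_vec i k) k + \<phi> (\<lambda>k. \<Sum>i\<in>S. u i * basis_vec i k) k)"
    by (rule H1[rule_format, OF v1 v2])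
  also have "\<phi> (\<lambda>k. u i * basis_vec i k) = (\<lambda>k. u i * \<phi> (basis_vec i) k)"
    by (rule H2[rule_format, OF bi])
  finally show ?case using insert by simp
qed

lemma vec_expand: "u \<in> vecs n \<Longrightarrow> u = (\<lambda>k. \<Sum>i\<in>{1..n}. u i * basis_vec i k)"
proof
  fix k assume "u \<in> vecs n"
  then show "u k = (\<Sum>i\<in>{1..n}. u i * basis_vec i k)"
    by (cases "k \<in> {1..n}") (auto simp: vecs_def basis_vec_def if_distrib cong: if_cong)
qed

lemma phi_expand: "linear_on_vecs n \<phi> \<Longrightarrow> u \<in> vecs n \<Longrightarrow>
   \<phi> u = (\<lambda>k. \<Sum>i\<in>{1..n}. u i * \<phi> (basis_vec i) k)"
proof -
  assume L: "linear_on_vecs n \<phi>" and u: "u \<in> vecs n"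
  have "\<phi> u = \<phi> (\<lambda>k. \<Sum>i\<in>{1..n}. u i * basis_vec i k)" using vec_expand[OF u] by simp
  also have "\<dots> = (\<lambda>k. \<Sum>i\<in>{1..n}. u i * \<phi> (basis_vec i) k)"
    by (rule lin_sum[OF L]) auto
  finally show ?thesis .
qed


definition G :: "complex \<Rightarrow> complex \<Rightarrow> complex \<Rightarrow> (nat \<Rightarrow> complex) \<Rightarrow> nat \<Rightarrow> complex" where
  "G x a b u = (\<lambda>k. if k = 1 then x * u 1 else if k = 2 then u 2 else if k = 3 then x * u 3
     else if k = 4 then x * u 4 else if k = 5 then x^2 * u 5
     else if k = 6 then a * u 1 + b * u 2 + x^3 * u 6 else 0)"

lemma k6': "k \<notin> {1..6::nat} \<Longrightarrow> k \<noteq> 1 \<and> k \<noteq> 2 \<and> k \<noteq> 3 \<and> k \<noteq> 4 \<and> k \<noteq> 5 \<and> k \<noteq> 6" by auto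

lemma backward:
  assumes alg: "\<And>u v. alg_mult 6 c u v = P al be u v"
    and L: "linear_on_vecs 6 \<phi>" and x: "x \<noteq> 0"
    and i1: "\<phi> (basis_vec 1) = (\<lambda>k. x * basis_vec 1 k + a61 * basis_vec 6 k)"
    and i2: "\<phi> (basis_vec 2) = (\<lambda>k. basis_vec 2 k + a62 * basis_vec 6 k)"
    and i3: "\<phi> (basis_vec 3) = (\<lambda>k. x * basis_vec 3 k)"
    and i4: "\<phi> (basis_vec 4) = (\<lambda>k. x * basis_vec 4 k)"
    and i5: "\<phi> (basis_vec 5) = (\<lambda>k. x\<^sup>2 * basis_vec 5 k)"
    and i6: "\<phi> (basis_vec 6) = (\<lambda>k. x ^ 3 * basis_vec 6 k)"
  shows "is_automorphism 6 c \<phi>"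
proof -
  have phiG: "\<phi> u = G x a61 a62 u" if u: "u \<in> vecs 6" for u
  proof
    fix k
    have "\<phi> u k = (\<Sum>i\<in>{1..6}. u i * \<phi> (basis_vec i) k)"
      using phi_expand[OF L u] by simp
    also have "\<dots> = G x a61 a62 u k"
    proof (cases "k \<in> {1..6}")
      case True
      then show ?thesis using k6[OF True]
        by (elim disjE) (simp_all only: sum6 i1 i2 i3 i4 i5 i6, simp_all add: G_def basis_vec_def algebra_simps del: One_nat_def)
    next
      case False
      then show ?thesis using k6'[OF False]
        by (simp only: sum6 i1 i2 i3 i4 i5 i6, simp add: G_def basis_vec_def del: One_nat_def)
    qed
    finally show "\<phi> u k = G x a61 a62 u k" .
  qed
  have Gv: "G x a61 a62 u \<in> vecs 6" for u by (simp add: G_def vecs_def)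
  have Pv: "P al be u v \<in> vecs 6" for u v by (simp add: P_def vecs_def)
  have inj: "inj_on \<phi> (vecs 6)"
  proof (rule inj_onI)
    fix u v assume u: "u \<in> vecs 6" and v: "v \<in> vecs 6" and e: "\<phi> u = \<phi> v"
    hence e': "G x a61 a62 u = G x a61 a62 v" using phiG by simp
    show "u = v"
    proof
      fix k
      have c1: "u 1 = v 1" using fun_cong[OF e', of 1] x by (simp add: G_def)
      have c2: "u 2 = v 2" using fun_cong[OF e', of 2] x by (simp add: G_def)
      show "u k = v k"
      proof (cases "k \<in> {1..6}")
        case True
        then show ?thesis using k6[OF True] fun_cong[OF e', of k] x c1 c2
          by (elim disjE) (simp_all add: G_def del: One_nat_def)
      next
        case False thus ?thesis using u v by (simp add: vecs_def)
      qed
    qed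
  qed
  have surj: "\<phi> ` vecs 6 = vecs 6"
  proof
    show "\<phi> ` vecs 6 \<subseteq> vecs 6" using phiG Gv by auto
    show "vecs 6 \<subseteq> \<phi> ` vecs 6"
    proof
      fix w assume w: "w \<in> vecs 6"
      define u where "u = (\<lambda>k::nat. if k = 1 then w 1 / x else if k = 2 then w 2
        else if k = 3 then w 3 / x else if k = 4 then w 4 / x else if k = 5 then w 5 / x^2
        else if k = 6 then (w 6 - a61 * (w 1 / x) - a62 * w 2) / x^3 else 0)"
      have u: "u \<in> vecs 6" by (simp add: u_def vecs_def)
      have "G x a61 a62 u = w"
      proof
        fix k show "G x a61 a62 u k = w k"
        proof (cases "k \<in> {1..6}")
          case True
          then show ?thesis using k6[OF True] x
            by (elim disjE) (simp_all add: G_def u_def field_simps del: One_nat_def)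
        next
          case False thus ?thesis using w k6'[OF False] by (simp add: vecs_def G_def)
        qed
      qed
      thus "w \<in> \<phi> ` vecs 6" using phiG[OF u] u by (metis image_eqI)
    qed
  qed
  have mult: "\<phi> (alg_mult 6 c u v) = alg_mult 6 c (\<phi> u) (\<phi> v)" if u: "u \<in> vecs 6" and v: "v \<in> vecs 6" for u v :: "nat \<Rightarrow> complex"
  proof -
    have "\<phi> (alg_mult 6 c u v) = G x a61 a62 (P al be u v)" using alg phiG Pv by simp
    also have "\<dots> = P al be (G x a61 a62 u) (G x a61 a62 v)"
    proof
      fix k show "G x a61 a62 (P al be u v) k = P al be (G x a61 a62 u) (G x a61 a62 v) k"
        by (cases "k \<in> {1..6}") (auto simp: G_def P_def algebra_simps power2_eq_square power3_eq_cube)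
    qed
    also have "\<dots> = alg_mult 6 c (\<phi> u) (\<phi> v)" using alg phiG u v by simp
    finally show ?thesis .
  qed
  show ?thesis unfolding is_automorphism_def bij_betw_def using L inj surj mult by blast
qed


lemma forward:
  assumes alg: "\<And>u v. alg_mult 6 c u v = P al be u v"
    and al: "al \<noteq> 0" and be: "be \<noteq> 0"
    and A: "is_automorphism 6 c \<phi>"
  shows "\<exists>x a61 a62 :: complex. x \<noteq> 0 \<and>
        \<phi> (basis_vec 1) = (\<lambda>k. x * basis_vec 1 k + a61 * basis_vec 6 k) \<and>
        \<phi> (basis_vec 2) = (\<lambda>k. basis_vec 2 k + a62 * basis_vec 6 k) \<and>
        \<phi> (basis_vec 3) = (\<lambda>k. x * basis_vec 3 k) \<and>
        \<phi> (basis_vec 4) = (\<lambda>k. x * basis_vec 4 k) \<and>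
        \<phi> (basis_vec 5) = (\<lambda>k. x\<^sup>2 * basis_vec 5 k) \<and>
        \<phi> (basis_vec 6) = (\<lambda>k. x ^ 3 * basis_vec 6 k)"
proof -
  have L: "linear_on_vecs 6 \<phi>" and B: "bij_betw \<phi> (vecs 6) (vecs 6)"
    and M: "\<And>u v. u\<in>vecs 6 \<Longrightarrow> v\<in>vecs 6 \<Longrightarrow> \<phi> (alg_mult 6 c u v) = alg_mult 6 c (\<phi> u) (\<phi> v)"
    using A unfolding is_automorphism_def by blast+
  define m where "m = (\<lambda>i. \<phi> (basis_vec i))"
  have Av: "\<phi> (basis_vec i) \<in> vecs 6" if "i \<in> {1..6}" for i
    using B basis_in[OF that] unfolding bij_betw_def by blast
  have mvz: "m i k = 0" if "i \<in> {1..6}" "k \<notin> {1..6}" for i k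
    using Av[OF that(1)] that(2) unfolding m_def vecs_def by blast
  have E: "(\<Sum>l\<in>{1..6}. P al be (basis_vec i) (basis_vec j) l * m l k) = P al be (\<lambda>k. m i k) (\<lambda>k. m j k) k"
    if i: "i \<in> {1..6}" and j: "j \<in> {1..6}" for i j k
  proof -
    have Pv: "P al be (basis_vec i) (basis_vec j) \<in> vecs 6" by (simp add: P_def vecs_def)
    have "\<phi> (P al be (basis_vec i) (basis_vec j)) = P al be (m i) (m j)"
      using M[OF basis_in[OF i] basis_in[OF j]] unfolding alg m_def .
    then have "\<phi> (P al be (basis_vec i) (basis_vec j)) k = P al be (m i) (m j) k" by simp
    then show ?thesis using phi_expand[OF L Pv] unfolding m_def by simp
  qed
  note S = sum6 P_def basis_vec_def
  have s1: "m 3 1 = 0" "m 3 2 = 0" "m 3 3 = m 1 1 * m 2 2 - m 1 2 * m 2 1"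
    using E[of 1 2 1] E[of 1 2 2] E[of 1 2 3]  by (simp add: S del: One_nat_def)+
  have s2: "m 4 1 = 0" "m 4 2 = 0" "m 4 3 = 0" "m 4 4 = m 2 2 * m 3 3"
    using E[of 2 3 1] E[of 2 3 2] E[of 2 3 3] E[of 2 3 4] s1 by (simp add: S del: One_nat_def)+
  have s3: "m 5 1 = 0" "m 5 2 = 0" "m 5 3 = 0" "m 5 4 = 0" "m 5 5 = m 3 3 * m 4 4"
    using E[of 3 4 1] E[of 3 4 2] E[of 3 4 3] E[of 3 4 4] E[of 3 4 5] s1 s2 by (simp add: S del: One_nat_def)+
  have s4: "m 6 1 = 0" "m 6 2 = 0" "m 6 3 = 0" "m 6 4 = 0" "m 6 5 = 0" "m 6 6 = m 4 4 * m 5 5"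
    using E[of 4 5 1] E[of 4 5 2] E[of 4 5 3] E[of 4 5 4] E[of 4 5 5] E[of 4 5 6] s2 s3 by (simp add: S del: One_nat_def)+

  have nz6: "m 6 6 \<noteq> 0"
  proof
    assume h: "m 6 6 = 0"
    have "\<phi> (basis_vec 6) = (\<lambda>k. 0)"
    proof
      fix k show "\<phi> (basis_vec 6) k = 0"
      proof (cases "k \<in> {1..6}")
        case True then show ?thesis using k6[OF True] s4 h unfolding m_def
          by (elim disjE) (simp_all del: One_nat_def)
      next
        case False then show ?thesis using mvz[of 6 k] unfolding m_def by simp
      qed
    qed
    also have "\<dots> = \<phi> (\<lambda>k. 0)" using phi_zero[OF L] by simp
    finally have "basis_vec 6 = (\<lambda>k. 0::complex)"
      using B basis_in[of 6 6] unfolding bij_betw_def inj_on_def by (auto simp: vecs_def)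
    then have "basis_vec 6 6 = (0::complex)" by simp
    then show False by (simp add: basis_vec_def)
  qed
  have nz: "m 4 4 \<noteq> 0" "m 5 5 \<noteq> 0" "m 3 3 \<noteq> 0" "m 2 2 \<noteq> 0"
    using nz6 s4 s3 s2 by auto
  have s5: "m 1 3 = 0" "m 2 3 = 0"
    using E[of 1 4 5] E[of 2 4 5] s2 nz by (simp add: S del: One_nat_def)+
  have s6: "m 1 4 = 0" "m 2 4 = 0"
    using E[of 1 5 6] E[of 2 5 6] s3 s5 nz by (simp add: S del: One_nat_def)+
  have s7: "m 3 4 = 0" "m 3 5 = 0" "m 3 6 = 0"
    using E[of 1 2 4] E[of 1 2 5] E[of 1 2 6] s5 s6 by (simp add: S del: One_nat_def)+
  have s8: "m 1 2 = 0"
    using E[of 1 3 4] s1 s3 s5 nz by (simp add: S del: One_nat_def)+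

  have e135: "m 5 5 = m 1 1 * m 3 3" using E[of 1 3 5] s1 s3 s5 s6 s7 al by (simp add: S del: One_nat_def)
  have e356: "m 6 6 = m 3 3 * m 5 5" using E[of 3 5 6] s1 s3 s7 be by (simp add: S del: One_nat_def)
  have h1: "m 4 4 * m 5 5 = m 3 3 * m 5 5" using e356 s4(6) by simp
  have h2: "m 4 4 = m 3 3" using h1 nz(2) by simp
  have h3: "m 2 2 * m 3 3 = 1 * m 3 3" using s2(4) h2 by simp
  have m22: "m 2 2 = 1" using h3 nz(3) by (metis mult_cancel_right)
  have m33: "m 3 3 = m 1 1" using s1(3) s8 m22 by simp
  have m44: "m 4 4 = m 1 1" using s2(4) m22 m33 by simp
  have m11: "m 1 1 \<noteq> 0" using nz(3) m33 by simp
  have r235: "m 4 5 = al * (m 2 1 * m 3 3 - m 2 3 * m 3 1) + (m 2 3 * m 3 4 - m 2 4 * m 3 3)"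
    using E[of 2 3 5] by (simp add: S del: One_nat_def)
  have r236: "m 4 6 = (m 2 4 * m 3 5 - m 2 5 * m 3 4) + be * (m 2 3 * m 3 5 - m 2 5 * m 3 3)"
    using E[of 2 3 6] by (simp add: S del: One_nat_def)
  have r146: "0 = (m 1 4 * m 4 5 - m 1 5 * m 4 4) + be * (m 1 3 * m 4 5 - m 1 5 * m 4 3)"
    using E[of 1 4 6] by (simp add: S del: One_nat_def)
  have r246: "0 = (m 2 4 * m 4 5 - m 2 5 * m 4 4) + be * (m 2 3 * m 4 5 - m 2 5 * m 4 3)"
    using E[of 2 4 6] by (simp add: S del: One_nat_def)
  have r346: "m 5 6 = (m 3 4 * m 4 5 - m 3 5 * m 4 4) + be * (m 3 3 * m 4 5 - m 3 5 * m 4 3)"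
    using E[of 3 4 6] by (simp add: S del: One_nat_def)
  have r136: "al * m 5 6 = (m 1 4 * m 3 5 - m 1 5 * m 3 4) + be * (m 1 3 * m 3 5 - m 1 5 * m 3 3)"
    using E[of 1 3 6] by (simp add: S del: One_nat_def)
  have s11: "m 4 5 = al * (m 2 1 * m 3 3)" using r235 s5 s1(1) s6 by simp
  have s12: "m 1 5 = 0" "m 2 5 = 0" using r146 r246 s5 s6 s2(3) m44 m11 by simp_all
  have m46: "m 4 6 = 0" using r236 s12 s7 s5 s6 by simp
  have m56: "m 5 6 = 0" using r136 s5 s7 s12 al by simp
  have e346: "m 5 6 = be * (m 3 3 * m 4 5)" using r346 s7 s2(3) by simp
  have m21: "m 2 1 = 0" using e346 m56 s11 al be m11 m33 by simp
  have m45: "m 4 5 = 0" "m 4 6 = 0" "m 5 6 = 0" using s11 m21 m46 m56 by simp_all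
  have m55: "m 5 5 = (m 1 1)\<^sup>2" using s3 m33 m44 by (simp add: power2_eq_square)
  have m66: "m 6 6 = (m 1 1)^3" using s4 m44 m55 by (simp add: power2_eq_square power3_eq_cube)
  note all = s1(1-2) s2(1-3) s3(1-4) s4(1-5) s5 s6 s7 s8 m22 m33 m44 s12 m21 m45 m55 m66
  have fin: "\<phi> (basis_vec i) = (\<lambda>k. f k)" if i: "i \<in> {1..6}" and
     fk: "\<And>k. k \<in> {1..6} \<Longrightarrow> m i k = f k" and fz: "\<And>k. k \<notin> {1..6} \<Longrightarrow> f k = 0" for i f
  proof
    fix k show "\<phi> (basis_vec i) k = f k"
      using fk[of k] fz[of k] mvz[OF i, of k] unfolding m_def by (cases "k \<in> {1..6}") auto
  qed
  show ?thesis
  proof (intro exI conjI)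
    show "m 1 1 \<noteq> 0" by (rule m11)
    show "\<phi> (basis_vec 1) = (\<lambda>k. m 1 1 * basis_vec 1 k + m 1 6 * basis_vec 6 k)"
    proof (rule fin)
      fix k :: nat assume k: "k \<in> {1..6}"
      show "m 1 k = m 1 1 * basis_vec 1 k + m 1 6 * basis_vec 6 k" using k6[OF k] all by (elim disjE) (simp_all add: basis_vec_def del: One_nat_def)
    next
      fix k assume "k \<notin> {1..6::nat}"
      then show "m 1 1 * basis_vec 1 k + m 1 6 * basis_vec 6 k = 0" by (auto simp: basis_vec_def)
    qed simp
    show "\<phi> (basis_vec 2) = (\<lambda>k. basis_vec 2 k + m 2 6 * basis_vec 6 k)"
    proof (rule fin)
      fix k :: nat assume k: "k \<in> {1..6}"
      show "m 2 k = basis_vec 2 k + m 2 6 * basis_vec 6 k" using k6[OF k] all by (elim disjE) (simp_all add: basis_vec_def del: One_nat_def)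
    next
      fix k assume "k \<notin> {1..6::nat}"
      then show "basis_vec 2 k + m 2 6 * basis_vec 6 k = 0" by (auto simp: basis_vec_def)
    qed simp
    show "\<phi> (basis_vec 3) = (\<lambda>k. m 1 1 * basis_vec 3 k)"
    proof (rule fin)
      fix k :: nat assume k: "k \<in> {1..6}"
      show "m 3 k = m 1 1 * basis_vec 3 k" using k6[OF k] all by (elim disjE) (simp_all add: basis_vec_def del: One_nat_def)
    next
      fix k assume "k \<notin> {1..6::nat}"
      then show "m 1 1 * basis_vec 3 k = 0" by (auto simp: basis_vec_def)
    qed simp
    show "\<phi> (basis_vec 4) = (\<lambda>k. m 1 1 * basis_vec 4 k)"
    proof (rule fin)
      fix k :: nat assume k: "k \<in> {1..6}"
      show "m 4 k = m 1 1 * basis_vec 4 k" using k6[OF k] all by (elim disjE) (simp_all add: basis_vec_def del: One_nat_def)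
    next
      fix k assume "k \<notin> {1..6::nat}"
      then show "m 1 1 * basis_vec 4 k = 0" by (auto simp: basis_vec_def)
    qed simp
    show "\<phi> (basis_vec 5) = (\<lambda>k. (m 1 1)\<^sup>2 * basis_vec 5 k)"
    proof (rule fin)
      fix k :: nat assume k: "k \<in> {1..6}"
      show "m 5 k = (m 1 1)\<^sup>2 * basis_vec 5 k" using k6[OF k] all by (elim disjE) (simp_all add: basis_vec_def del: One_nat_def)
    next
      fix k assume "k \<notin> {1..6::nat}"
      then show "(m 1 1)\<^sup>2 * basis_vec 5 k = 0" by (auto simp: basis_vec_def)
    qed simp
    show "\<phi> (basis_vec 6) = (\<lambda>k. m 1 1 ^ 3 * basis_vec 6 k)"
    proof (rule fin)
      fix k :: nat assume k: "k \<in> {1..6}"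
      show "m 6 k = m 1 1 ^ 3 * basis_vec 6 k" using k6[OF k] all by (elim disjE) (simp_all add: basis_vec_def del: One_nat_def)
    next
      fix k assume "k \<notin> {1..6::nat}"
      then show "m 1 1 ^ 3 * basis_vec 6 k = 0" by (auto simp: basis_vec_def)
    qed simp
  qed
qed

theorem mainTheorem16:
  fixes c :: "nat \<Rightarrow> nat \<Rightarrow> nat \<Rightarrow> complex"
  assumes "in_Tprime 6 c"
    and "c 1 3 4 = 0" and "c 1 4 5 = 0" and "c 1 5 6 = 0" and "c 2 4 5 = 0"
    and "c 2 5 6 = 0" and "c 1 4 6 = 0" and "c 2 4 6 = 0" and "c 1 3 6 = 0"
    and "c 1 3 5 * c 3 5 6 \<noteq> 0"
  shows "is_automorphism 6 c \<phi> \<longleftrightarrow>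
    (linear_on_vecs 6 \<phi> \<and>
     (\<exists>x a61 a62 :: complex. x \<noteq> 0 \<and>
        \<phi> (basis_vec 1) = (\<lambda>k. x * basis_vec 1 k + a61 * basis_vec 6 k) \<and>
        \<phi> (basis_vec 2) = (\<lambda>k. basis_vec 2 k + a62 * basis_vec 6 k) \<and>
        \<phi> (basis_vec 3) = (\<lambda>k. x * basis_vec 3 k) \<and>
        \<phi> (basis_vec 4) = (\<lambda>k. x * basis_vec 4 k) \<and>
        \<phi> (basis_vec 5) = (\<lambda>k. x\<^sup>2 * basis_vec 5 k) \<and>
        \<phi> (basis_vec 6) = (\<lambda>k. x ^ 3 * basis_vec 6 k)))"
  proof -
  have alg: "\<And>u v. alg_mult 6 c u v = P (c 1 3 5) (c 3 5 6) u v"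
    using alg_mult_P assms(1-9) by blast
  have al: "c 1 3 5 \<noteq> 0" and be: "c 3 5 6 \<noteq> 0" using assms(10) by auto
  show ?thesis
    apply (rule iffI)
     apply (rule conjI)
      apply (simp add: is_automorphism_def)
     apply (erule forward[OF alg al be])
    apply (elim conjE exE)
    apply (rule backward[OF alg]; assumption)
    done
qed

end
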